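(* Let $(E,B,p,\Gamma)$ be a compact graph bundle and $M\subseteq E$ a nowhere dense closed set. Then the set $\{b\in B: M_b \text{ is totally disconnected}\}$ is residual in $B$.
   Context: Compact graph bundle $(E,B,p,\Gamma)$: $E,B$ compact metric spaces, $\Gamma$ a graph (nonempty compact metric space that is a finite union of arcs pairwise disjoint or meeting only at end-points), $p:E\to B$ a continuous surjection such that every $b\in B$ has an open neighbourhood $U$ and a homeomorphism $h:p^{-1}(U)\to U\times\Gamma$ with $\mathrm{pr}_1\circ h=p$. $M_b=M\cap p^{-1}(b)$. Residual: complement of a countable union of nowhere dense sets. *)

theory Defs
  imports "HOL-Analysis.Analysis"
begin

definition is_graph :: "'g::metric_space set \<Rightarrow> bool" where
  "is_graph G \<longleftrightarrow> G \<noteq> {} \<and> compact G \<and>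
     (\<exists>gs :: (real \<Rightarrow> 'g) list.
        (\<forall>g\<in>set gs. arc g) \<and>
        G = \<Union> (path_image ` set gs) \<and>
        (\<forall>i<length gs. \<forall>j<length gs. i \<noteq> j \<longrightarrow>
           path_image (gs!i) \<inter> path_image (gs!j) \<subseteq>
             {pathstart (gs!i), pathfinish (gs!i)} \<inter> {pathstart (gs!j), pathfinish (gs!j)}))"

definition compact_graph_bundle ::
  "'e::metric_space set \<Rightarrow> 'b::metric_space set \<Rightarrow> ('e \<Rightarrow> 'b) \<Rightarrow> 'g::metric_space set \<Rightarrow> bool" where
  "compact_graph_bundle E B p G \<longleftrightarrow>
     compact E \<and> compact B \<and> is_graph G \<and>
     continuous_on E p \<and> p ` E = B \<and>
     (\<forall>b\<in>B. \<exists>U h k. openin (top_of_set B) U \<and> b \<in> U \<and>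
        homeomorphism {x\<in>E. p x \<in> U} (U \<times> G) h k \<and>
        (\<forall>x\<in>{x\<in>E. p x \<in> U}. fst (h x) = p x))"

definition nowhere_dense_in :: "'a::topological_space set \<Rightarrow> 'a set \<Rightarrow> bool" where
  "nowhere_dense_in S A \<longleftrightarrow> A \<subseteq> S \<and>
     (\<forall>V. openin (top_of_set S) V \<and> V \<subseteq> S \<inter> closure A \<longrightarrow> V = {})"

definition residual_in :: "'a::topological_space set \<Rightarrow> 'a set \<Rightarrow> bool" where
  "residual_in S R \<longleftrightarrow>
     (\<exists>\<F>. countable \<F> \<and> (\<forall>N\<in>\<F>. nowhere_dense_in S N) \<and> R = S - \<Union>\<F>)"

definition totally_disconnected :: "'a::topological_space set \<Rightarrow> bool" where
  "totally_disconnected S \<longleftrightarrow> (\<forall>C. C \<subseteq> S \<and> connected C \<longrightarrow> (\<exists>x. C \<subseteq> {x}))"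

end

theory Submission
  imports Defs
begin

lemma arc_piece_open:
  fixes gs :: "(real \<Rightarrow> 'g::metric_space) list"
  assumes arcs: "\<forall>g\<in>set gs. arc g" and Geq: "G = \<Union> (path_image ` set gs)"
    and disj: "\<forall>i<length gs. \<forall>j<length gs. i \<noteq> j \<longrightarrow>
           path_image (gs!i) \<inter> path_image (gs!j) \<subseteq>
             {pathstart (gs!i), pathfinish (gs!i)} \<inter> {pathstart (gs!j), pathfinish (gs!j)}"
    and i: "i < length gs" and ab: "0 < \<alpha>" "\<alpha> < \<beta>" "\<beta> < 1"
  shows "openin (top_of_set G) ((gs!i) ` {\<alpha><..<\<beta>})"
proof -
  define g where "g = gs!i"
  have ag: "arc g" using arcs i g_def by auto
  then have inj: "inj_on g {0..1}" and pg: "path g" by (auto simp: arc_def)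
  have cg: "continuous_on {0..1} g" using pg by (simp add: path_def)
  define Z where "Z = g ` {0..\<alpha>} \<union> g ` {\<beta>..1} \<union> (\<Union>j\<in>{j. j < length gs \<and> j \<noteq> i}. path_image (gs!j))"
  have "compact (g ` {0..\<alpha>})"
    by (rule compact_continuous_image) (use cg ab in \<open>auto intro: continuous_on_subset\<close>)
  moreover have "compact (g ` {\<beta>..1})"
    by (rule compact_continuous_image) (use cg ab in \<open>auto intro: continuous_on_subset\<close>)
  moreover have "compact (path_image (gs!j))" if "j < length gs" for j
    using arcs that by (simp add: compact_path_image arc_imp_path)
  ultimately have cZ: "closed Z" unfolding Z_def
    by (intro closed_Un compact_imp_closed closed_UN) auto
  have eq: "g ` {\<alpha><..<\<beta>} = G - Z"
  proof
    show "g ` {\<alpha><..<\<beta>} \<subseteq> G - Z"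
    proof
      fix y assume "y \<in> g ` {\<alpha><..<\<beta>}"
      then obtain s where s: "s \<in> {\<alpha><..<\<beta>}" "y = g s" by auto
      have s01: "s \<in> {0..1}" using s ab by auto
      have "y \<in> path_image g" using s01 s by (auto simp: path_image_def)
      then have yG: "y \<in> G" using Geq g_def i by auto
      have n1: "y \<notin> g ` {0..\<alpha>}"
      proof
        assume "y \<in> g ` {0..\<alpha>}"
        then obtain s' where "s' \<in> {0..\<alpha>}" "g s' = g s" using s by auto
        then show False using inj s01 s ab unfolding inj_on_def by force
      qed
      have n2: "y \<notin> g ` {\<beta>..1}"
      proof
        assume "y \<in> g ` {\<beta>..1}"
        then obtain s' where "s' \<in> {\<beta>..1}" "g s' = g s" using s by auto
        then show False using inj s01 s ab unfolding inj_on_def by force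
      qed
      have n3: "y \<notin> path_image (gs!j)" if j: "j < length gs" "j \<noteq> i" for j
      proof
        assume "y \<in> path_image (gs!j)"
        then have "y \<in> {pathstart g, pathfinish g}"
          using disj j i \<open>y \<in> path_image g\<close> g_def by blast
        then have "g s = g 0 \<or> g s = g 1" using s by (auto simp: pathstart_def pathfinish_def)
        then show False using inj s01 s ab unfolding inj_on_def by force
      qed
      show "y \<in> G - Z" using yG n1 n2 n3 unfolding Z_def by auto
    qed
  next
    show "G - Z \<subseteq> g ` {\<alpha><..<\<beta>}"
    proof
      fix y assume y: "y \<in> G - Z"
      then obtain j where j: "j < length gs" "y \<in> path_image (gs!j)"
        using Geq by (auto simp: in_set_conv_nth)
      have "j = i" using y j unfolding Z_def by auto
      then obtain s where s: "s \<in> {0..1}" "y = g s" using j g_def by (auto simp: path_image_def)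
      have "s \<notin> {0..\<alpha>}" "s \<notin> {\<beta>..1}" using y s unfolding Z_def by auto
      then have "s \<in> {\<alpha><..<\<beta>}" using s by auto
      then show "y \<in> g ` {\<alpha><..<\<beta>}" using s by auto
    qed
  qed
  show ?thesis unfolding g_def[symmetric] eq
    using cZ by (simp add: openin_open) (metis Diff_eq open_Compl)
qed



lemma graph_closed_conn_interior:
  fixes G :: "'g::metric_space set"
  assumes gr: "is_graph G" and cC: "compact C" and CG: "C \<subseteq> G" and conn: "connected C"
    and ab: "a \<in> C" "b \<in> C" "a \<noteq> b"
  shows "\<exists>W. openin (top_of_set G) W \<and> W \<noteq> {} \<and> W \<subseteq> C"
proof (rule ccontr)
  assume NW: "\<not> ?thesis"
  obtain gs :: "(real \<Rightarrow> 'g) list" where arcs: "\<forall>g\<in>set gs. arc g" and Geq: "G = \<Union> (path_image ` set gs)"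
    and disj: "\<forall>i<length gs. \<forall>j<length gs. i \<noteq> j \<longrightarrow>
           path_image (gs!i) \<inter> path_image (gs!j) \<subseteq>
             {pathstart (gs!i), pathfinish (gs!i)} \<inter> {pathstart (gs!j), pathfinish (gs!j)}"
    using gr unfolding is_graph_def by blast
  have infC: "infinite C"
  proof
    assume "finite C"
    then obtain z where "C = {} \<or> C = {z}" using connected_finite_iff_sing conn by blast
    then show False using ab by auto
  qed
  define P where "P = (\<Union>g\<in>set gs. {g 0, g 1})"
  have "finite P" unfolding P_def by auto
  then obtain x where xC: "x \<in> C" and xP: "x \<notin> P"
    using infC by (metis finite_subset subsetI)
  obtain g0 where g0: "g0 \<in> set gs" "x \<in> path_image g0" using xC CG Geq by auto
  obtain i where i: "i < length gs" and xi: "x \<in> path_image (gs!i)"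
    using g0 by (metis in_set_conv_nth)
  define g where "g = gs!i"
  have ag: "arc g" using arcs i g_def by auto
  then have inj: "inj_on g {0..1}" and pg: "path g" by (auto simp: arc_def)
  have cg: "continuous_on {0..1} g" using pg by (simp add: path_def)
  obtain t where t: "t \<in> {0..1}" "x = g t" using xi g_def by (auto simp: path_image_def)
  have "g \<in> set gs" using i g_def by auto
  then have "t \<noteq> 0" "t \<noteq> 1" using xP t unfolding P_def by auto
  with t have t01: "0 < t" "t < 1" by auto
  have H: "\<not> g ` {\<alpha><..<\<beta>} \<subseteq> C" if "0 < \<alpha>" "\<alpha> < \<beta>" "\<beta> < 1" for \<alpha> \<beta>
  proof
    assume sub: "g ` {\<alpha><..<\<beta>} \<subseteq> C"
    have "openin (top_of_set G) (g ` {\<alpha><..<\<beta>})"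
      using arc_piece_open[OF arcs Geq disj i that] g_def by simp
    moreover have "g ` {\<alpha><..<\<beta>} \<noteq> {}" using that by auto
    ultimately show False using NW sub by blast
  qed
  obtain a' where a': "0 < a'" "a' < t" "g a' \<notin> C"
  proof -
    have "\<not> g ` {t/2<..<t} \<subseteq> C" using H t01 by auto
    then obtain s where s: "s \<in> {t/2<..<t}" "g s \<notin> C" by blast
    have "0 < s" "s < t" using s t01 by auto
    then show thesis using that[of s] s by blast
  qed
  obtain b' where b': "t < b'" "b' < 1" "g b' \<notin> C"
  proof -
    have "\<not> g ` {t<..<(t+1)/2} \<subseteq> C" using H t01 by auto
    then obtain s where s: "s \<in> {t<..<(t+1)/2}" "g s \<notin> C" by blast
    have "t < s" "s < 1" using s t01 by auto
    then show thesis using that[of s] s by blast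
  qed
  define S where "S = C \<inter> g ` {a'<..<b'}"
  have op: "openin (top_of_set G) (g ` {a'<..<b'})"
    using arc_piece_open[OF arcs Geq disj i, of a' b'] a' b' t01 g_def by simp
  then obtain T where T: "open T" "g ` {a'<..<b'} = G \<inter> T" by (auto simp: openin_open)
  have "S = C \<inter> T" unfolding S_def using T CG by auto
  then have oS: "openin (top_of_set C) S" using T by (auto simp: openin_open)
  have "compact (g ` {a'..b'})"
    by (rule compact_continuous_image) (use cg a' b' in \<open>auto intro: continuous_on_subset\<close>)
  then have clab: "closed (g ` {a'..b'})" by (rule compact_imp_closed)
  have "S = C \<inter> g ` {a'..b'}"
  proof -
    have "g ` {a'..b'} = g ` {a'<..<b'} \<union> {g a', g b'}" using a' b'
      by (auto simp: image_iff) (metis atLeastAtMost_iff greaterThanLessThan_iff less_eq_real_def)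
    then show ?thesis unfolding S_def using a' b' by auto
  qed
  then have cS: "closedin (top_of_set C) S" using clab by (auto simp: closedin_closed)
  have "x \<in> S" unfolding S_def using xC t a' b' by auto
  then have "S = C" using conn oS cS unfolding connected_clopen by blast
  then have Csub: "C \<subseteq> g ` {a'<..<b'}" unfolding S_def by auto
  obtain k where hom: "homeomorphism {0..1} (path_image g) g k" using homeomorphism_arc[OF ag] by blast
  have kg: "\<And>s. s \<in> {0..1} \<Longrightarrow> k (g s) = s" using hom by (simp add: homeomorphism_def)
  have ck: "continuous_on (path_image g) k" using hom by (simp add: homeomorphism_def)
  have Cpi: "C \<subseteq> path_image g" using Csub a' b' t01 by (auto simp: path_image_def)
  have connT: "connected (k ` C)"
    by (rule connected_continuous_image[OF continuous_on_subset[OF ck Cpi] conn])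
  obtain u where u: "u \<in> {a'<..<b'}" "a = g u" using Csub ab by auto
  obtain v where v: "v \<in> {a'<..<b'}" "b = g v" using Csub ab by auto
  have u01: "u \<in> {0..1}" and v01: "v \<in> {0..1}" using u v a' b' t01 by auto
  have "u \<in> k ` C" using kg[OF u01] u ab by force
  moreover have "v \<in> k ` C" using kg[OF v01] v ab by force
  ultimately have ivl: "{min u v..max u v} \<subseteq> k ` C"
    using connected_contains_Icc[OF connT] by (metis max_def min_def)
  have "u \<noteq> v" using u v ab by auto
  then have mm: "min u v < max u v" by auto
  have "g ` {min u v<..<max u v} \<subseteq> C"
  proof
    fix y assume "y \<in> g ` {min u v<..<max u v}"
    then obtain s where s: "s \<in> {min u v<..<max u v}" "y = g s" by auto
    then have "s \<in> k ` C" using ivl by auto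
    then obtain c where c: "c \<in> C" "s = k c" by auto
    obtain s' where s': "s' \<in> {a'<..<b'}" "c = g s'" using Csub c by auto
    have "s' \<in> {0..1}" using s' a' b' by auto
    then have "s = s'" using kg c s' by auto
    then show "y \<in> C" using s s' c by auto
  qed
  moreover have "0 < min u v" "max u v < 1" using u v a' b' by auto
  ultimately show False using H mm by blast
qed

lemma graph_ball_conn:
  fixes G :: "'g::metric_space set"
  assumes gr: "is_graph G" and c: "c \<in> G" and r: "r > 0"
  shows "\<exists>S. S \<subseteq> G \<inter> ball c r \<and> connected S \<and> (\<exists>x y. x \<in> S \<and> y \<in> S \<and> x \<noteq> y)"
proof -
  obtain gs :: "(real \<Rightarrow> 'g) list" where arcs: "\<forall>g\<in>set gs. arc g" and Geq: "G = \<Union> (path_image ` set gs)"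
    using gr unfolding is_graph_def by blast
  obtain g where g: "g \<in> set gs" "c \<in> path_image g" using c Geq by auto
  have ag: "arc g" using arcs g by auto
  then have inj: "inj_on g {0..1}" and pg: "path g" by (auto simp: arc_def)
  have cg: "continuous_on {0..1} g" using pg by (simp add: path_def)
  obtain t where t: "t \<in> {0..1}" "c = g t" using g by (auto simp: path_image_def)
  obtain e where e: "e > 0" "\<forall>s\<in>{0..1}. dist s t < e \<longrightarrow> dist (g s) (g t) < r"
    using cg t r unfolding continuous_on_iff by blast
  define d where "d = min (1/2) (e/2)"
  define s0 where "s0 = (if t \<le> 1/2 then t + d else t - d)"
  have d: "d > 0" "d < e" "d \<le> 1/2" using e unfolding d_def by auto
  have s0: "s0 \<in> {0..1}" "s0 \<noteq> t" "\<bar>s0 - t\<bar> = d" using t d unfolding s0_def by auto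
  define I where "I = {min t s0..max t s0}"
  have I01: "I \<subseteq> {0..1}" using t s0 unfolding I_def by auto
  have Id: "\<bar>s - t\<bar> \<le> d" if "s \<in> I" for s using that s0 unfolding I_def by auto
  have gG: "path_image g \<subseteq> G" using g Geq by auto
  have "g ` I \<subseteq> G \<inter> ball c r"
  proof
    fix y assume "y \<in> g ` I"
    then obtain s where s: "s \<in> I" "y = g s" by auto
    have "dist s t < e" using Id[OF s(1)] d by (simp add: dist_real_def)
    then have "dist (g s) (g t) < r" using e I01 s by auto
    moreover have "y \<in> G" using gG I01 s by (auto simp: path_image_def)
    ultimately show "y \<in> G \<inter> ball c r" using s t by (simp add: dist_commute)
  qed
  moreover have "connected (g ` I)"
    by (rule connected_continuous_image[OF continuous_on_subset[OF cg I01]]) (simp add: I_def)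
  moreover have "g t \<in> g ` I" "g s0 \<in> g ` I" unfolding I_def by auto
  moreover have "g t \<noteq> g s0" using inj t s0 unfolding inj_on_def by metis
  ultimately show ?thesis by blast
qed



lemma nd_piece:
  fixes E :: "'e::metric_space set" and B :: "'b::metric_space set"
    and p :: "'e \<Rightarrow> 'b" and G :: "'g::metric_space set" and M :: "'e set"
  assumes U: "openin (top_of_set B) U"
    and hom: "homeomorphism {x\<in>E. p x \<in> U} (U \<times> G) h k"
    and pc: "continuous_on E p" and pE: "p ` E \<subseteq> B"
    and Mc: "closedin (top_of_set E) M" and Mnd: "nowhere_dense_in E M"
    and J: "J \<subseteq> G" "J \<noteq> {}" "openin (top_of_set G) J"
  shows "nowhere_dense_in B {b\<in>U. \<forall>y\<in>J. k (b,y) \<in> M}"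
proof -
  define N where "N = {b\<in>U. \<forall>y\<in>J. k (b,y) \<in> M}"
  define Ub where "Ub = {x\<in>E. p x \<in> U}"
  have UB: "U \<subseteq> B" using U by (metis openin_imp_subset)
  have kc: "continuous_on (U \<times> G) k" and kim: "k ` (U \<times> G) = Ub"
    using hom unfolding homeomorphism_def Ub_def by auto
  obtain S where S: "closed S" "M = E \<inter> S" using Mc by (auto simp: closedin_closed)
  have clN: "closedin (top_of_set U) N"
  proof -
    have cl1: "closedin (top_of_set U) {b\<in>U. k (b,y) \<in> M}" if y: "y \<in> J" for y
    proof -
      have "continuous_on U (\<lambda>b. k (b,y))"
        by (rule continuous_on_compose2[OF kc]) (use y J in \<open>auto intro!: continuous_intros\<close>)
      then have "closedin (top_of_set U) (U \<inter> (\<lambda>b. k (b,y)) -` S)"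
        using S(1) by (rule continuous_closedin_preimage)
      moreover have "U \<inter> (\<lambda>b. k (b,y)) -` S = {b\<in>U. k (b,y) \<in> M}"
        using kim y J S Ub_def by auto
      ultimately show ?thesis by simp
    qed
    have "N = (\<Inter>y\<in>J. {b\<in>U. k (b,y) \<in> M})" unfolding N_def using J by auto
    then show ?thesis using closedin_INT[OF J(2) cl1] by simp
  qed
  then obtain T where T: "closed T" "N = U \<inter> T" by (auto simp: closedin_closed)
  have "N \<subseteq> B" using UB N_def by auto
  moreover have "V = {}" if V: "openin (top_of_set B) V" "V \<subseteq> B \<inter> closure N" for V
  proof (rule ccontr)
    assume "V \<noteq> {}"
    then obtain z where z: "z \<in> V" by auto
    obtain Ob where Ob: "open Ob" "V = B \<inter> Ob" using V(1) unfolding openin_open by blast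
    have "Ob \<inter> closure N \<noteq> {}" using z Ob(2) V(2) by blast
    then have "Ob \<inter> N \<noteq> {}" using open_Int_closure_eq_empty[OF Ob(1)] by simp
    then obtain b1 where b1: "b1 \<in> Ob" "b1 \<in> N" by auto
    define V' where "V' = U \<inter> Ob"
    have oV': "openin (top_of_set U) V'" using Ob(1) unfolding V'_def openin_open by blast
    have "closure N \<subseteq> T" using T by (simp add: closure_minimal)
    then have V'N: "V' \<subseteq> N" using V(2) Ob(2) T(2) UB \<open>closure N \<subseteq> T\<close> unfolding V'_def by blast
    have b1V': "b1 \<in> V'" using b1 N_def V'_def by auto
    obtain y0 where y0: "y0 \<in> J" using J by auto
    define W where "W = k ` (V' \<times> J)"
    have "openin (top_of_set (U \<times> G)) (V' \<times> J)" using oV' J(3) by (rule openin_Times)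
    then have "openin (top_of_set Ub) W"
      using homeomorphism_imp_open_map[OF iffD1[OF homeomorphism_sym hom]] unfolding W_def Ub_def by blast
    moreover have "openin (top_of_set E) Ub"
    proof -
      have "p \<in> E \<rightarrow> B" using pE by auto
      then have "openin (top_of_set E) (E \<inter> p -` U)"
        using continuous_openin_preimage[OF pc _ U] by blast
      moreover have "E \<inter> p -` U = Ub" unfolding Ub_def by auto
      ultimately show ?thesis by simp
    qed
    ultimately have oW: "openin (top_of_set E) W" by (rule openin_trans)
    have WM: "W \<subseteq> M" using V'N unfolding W_def N_def by auto
    have "W \<subseteq> E" using oW by (metis openin_imp_subset)
    then have "W \<subseteq> E \<inter> closure M" using WM closure_subset by blast
    then have "W = {}" using Mnd oW unfolding nowhere_dense_in_def by blast
    moreover have "k (b1, y0) \<in> W" unfolding W_def using b1V' y0 by blast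
    ultimately show False by auto
  qed
  ultimately show ?thesis unfolding N_def[symmetric] nowhere_dense_in_def by blast
qed



theorem lemma17:
  fixes E :: "'e::metric_space set" and B :: "'b::metric_space set"
    and p :: "'e \<Rightarrow> 'b" and G :: "'g::metric_space set" and M :: "'e set"
  assumes "compact_graph_bundle E B p G"
    and "M \<subseteq> E" and "closedin (top_of_set E) M" and "nowhere_dense_in E M"
  shows "residual_in B {b\<in>B. totally_disconnected {x\<in>M. p x = b}}"
proof -
  note bd = assms(1)[unfolded compact_graph_bundle_def]
  have cE: "compact E" and cB: "compact B" and gr: "is_graph G" and pc: "continuous_on E p"
    and pE: "p ` E = B" using bd by auto
  have cG: "compact G" using gr unfolding is_graph_def by auto
  have "\<forall>b\<in>B. \<exists>U h k. openin (top_of_set B) U \<and> b \<in> U \<and>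
        homeomorphism {x\<in>E. p x \<in> U} (U \<times> G) h k \<and>
        (\<forall>x\<in>{x\<in>E. p x \<in> U}. fst (h x) = p x)" using bd by (elim conjE) assumption
  then obtain U where "\<forall>b\<in>B. \<exists>h k. openin (top_of_set B) (U b) \<and> b \<in> U b \<and>
        homeomorphism {x\<in>E. p x \<in> U b} (U b \<times> G) h k \<and>
        (\<forall>x\<in>{x\<in>E. p x \<in> U b}. fst (h x) = p x)" by (rule bchoice[THEN exE])
  then obtain h where "\<forall>b\<in>B. \<exists>k. openin (top_of_set B) (U b) \<and> b \<in> U b \<and>
        homeomorphism {x\<in>E. p x \<in> U b} (U b \<times> G) (h b) k \<and>
        (\<forall>x\<in>{x\<in>E. p x \<in> U b}. fst (h b x) = p x)" by (rule bchoice[THEN exE])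
  then obtain k where Uhk0: "\<forall>b\<in>B. openin (top_of_set B) (U b) \<and> b \<in> U b \<and>
        homeomorphism {x\<in>E. p x \<in> U b} (U b \<times> G) (h b) (k b) \<and>
        (\<forall>x\<in>{x\<in>E. p x \<in> U b}. fst (h b x) = p x)" by (rule bchoice[THEN exE])
  have Uhk: "\<And>b. b \<in> B \<Longrightarrow> openin (top_of_set B) (U b) \<and> b \<in> U b \<and>
        homeomorphism {x\<in>E. p x \<in> U b} (U b \<times> G) (h b) (k b) \<and>
        (\<forall>x\<in>{x\<in>E. p x \<in> U b}. fst (h b x) = p x)" using Uhk0 by blast
  have "\<forall>b\<in>B. \<exists>T. open T \<and> U b = B \<inter> T" using Uhk unfolding openin_open by blast
  then obtain T where T0: "\<forall>b\<in>B. open (T b) \<and> U b = B \<inter> T b" by (rule bchoice[THEN exE])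
  have T: "\<And>b. b \<in> B \<Longrightarrow> open (T b) \<and> U b = B \<inter> T b" using T0 by blast
  obtain D where D: "D \<subseteq> B" "finite D" "B \<subseteq> (\<Union>b\<in>D. T b)"
  proof (rule compactE_image[OF cB, of B T])
    show "\<And>b. b \<in> B \<Longrightarrow> open (T b)" using T by blast
    show "B \<subseteq> (\<Union>b\<in>B. T b)" using T Uhk by blast
  qed blast
  have Dcov: "\<exists>b0\<in>D. b \<in> U b0" if bB: "b \<in> B" for b
  proof -
    obtain b0 where "b0 \<in> D" "b \<in> T b0" using D bB by blast
    then show ?thesis using T[of b0] D bB by blast
  qed
  have "\<forall>n::nat. \<exists>Q. Q \<subseteq> G \<and> finite Q \<and> G \<subseteq> (\<Union>c\<in>Q. ball c (1 / real (Suc n)))"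
  proof
    fix n :: nat
    show "\<exists>Q. Q \<subseteq> G \<and> finite Q \<and> G \<subseteq> (\<Union>c\<in>Q. ball c (1 / real (Suc n)))"
    proof (rule compactE_image[OF cG, of G "\<lambda>c. ball c (1 / real (Suc n))"])
      show "G \<subseteq> (\<Union>c\<in>G. ball c (1 / real (Suc n)))" by force
    qed auto
  qed
  then obtain Q where Q0: "\<forall>n. Q n \<subseteq> G \<and> finite (Q n) \<and> G \<subseteq> (\<Union>c\<in>Q n. ball c (1 / real (Suc n)))"
    by (rule choice[THEN exE])
  have Q: "\<And>n. Q n \<subseteq> G \<and> finite (Q n) \<and> G \<subseteq> (\<Union>c\<in>Q n. ball c (1 / real (Suc n)))"
    using Q0 by blast
  define N where "N b0 c n = {b\<in>U b0. \<forall>y\<in>G \<inter> ball c (1 / real (Suc n)). k b0 (b,y) \<in> M}" for b0 c n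
  define F where "F = (\<lambda>(b0,n,c). N b0 c n) ` (D \<times> Sigma UNIV Q)"
  have kprops: "k b0 (b,y) \<in> E \<and> p (k b0 (b,y)) = b \<and> h b0 (k b0 (b,y)) = (b,y)"
    if H3: "b0 \<in> B" "b \<in> U b0" "y \<in> G" for b0 b y
  proof -
    have hom: "homeomorphism {x\<in>E. p x \<in> U b0} (U b0 \<times> G) (h b0) (k b0)" using Uhk H3 by blast
    have "(b,y) \<in> U b0 \<times> G" using H3 by auto
    then have 1: "k b0 (b,y) \<in> {x\<in>E. p x \<in> U b0}" and 2: "h b0 (k b0 (b,y)) = (b,y)"
      using hom unfolding homeomorphism_def by blast+
    have "fst (h b0 (k b0 (b,y))) = p (k b0 (b,y))" using Uhk[OF H3(1)] 1 by blast
    then show ?thesis using 1 2 by auto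
  qed
  have cntF: "countable F" unfolding F_def
    using D Q by (intro countable_image countable_SIGMA) (auto intro: countable_finite)
  have ndF: "nowhere_dense_in B X" if XF: "X \<in> F" for X
  proof -
    obtain b0 n c where X: "X = N b0 c n" "b0 \<in> D" "c \<in> Q n" using XF unfolding F_def by auto
    have b0B: "b0 \<in> B" using X D by auto
    have cG': "c \<in> G" using X Q by blast
    show ?thesis unfolding X N_def
    proof (rule nd_piece)
      show "openin (top_of_set B) (U b0)" using Uhk b0B by blast
      show "homeomorphism {x\<in>E. p x \<in> U b0} (U b0 \<times> G) (h b0) (k b0)" using Uhk b0B by blast
      show "continuous_on E p" by (rule pc)
      show "p ` E \<subseteq> B" using pE by simp
      show "closedin (top_of_set E) M" by (rule assms(3))
      show "nowhere_dense_in E M" by (rule assms(4))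
      show "G \<inter> ball c (1 / real (Suc n)) \<subseteq> G" by blast
      show "G \<inter> ball c (1 / real (Suc n)) \<noteq> {}" using cG' by auto
      show "openin (top_of_set G) (G \<inter> ball c (1 / real (Suc n)))"
        unfolding openin_open by blast
    qed
  qed
  have kc: "continuous_on (U b0 \<times> G) (k b0)" and hc: "continuous_on {x\<in>E. p x \<in> U b0} (h b0)"
    and him: "h b0 ` {x\<in>E. p x \<in> U b0} = U b0 \<times> G"
    and khx: "\<And>x. x \<in> {x\<in>E. p x \<in> U b0} \<Longrightarrow> k b0 (h b0 x) = x"
    if b0B: "b0 \<in> B" for b0
  proof -
    have hom: "homeomorphism {x\<in>E. p x \<in> U b0} (U b0 \<times> G) (h b0) (k b0)" using Uhk b0B by blast
    show "continuous_on (U b0 \<times> G) (k b0)" using hom unfolding homeomorphism_def by blast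
    show "continuous_on {x\<in>E. p x \<in> U b0} (h b0)" using hom unfolding homeomorphism_def by blast
    show "h b0 ` {x\<in>E. p x \<in> U b0} = U b0 \<times> G" using hom unfolding homeomorphism_def by blast
    show "\<And>x. x \<in> {x\<in>E. p x \<in> U b0} \<Longrightarrow> k b0 (h b0 x) = x" using hom unfolding homeomorphism_def by blast
  qed
  have fwd: "b \<notin> \<Union>F" if bB: "b \<in> B" and td: "totally_disconnected {x\<in>M. p x = b}" for b
  proof
    assume "b \<in> \<Union>F"
    then obtain b0 n c where bN: "b \<in> N b0 c n" "b0 \<in> D" "c \<in> Q n" unfolding F_def by auto
    have b0B: "b0 \<in> B" using bN D by auto
    have cG': "c \<in> G" using bN Q by blast
    have bU: "b \<in> U b0" using bN unfolding N_def by blast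
    have "(1::real) / real (Suc n) > 0" by simp
    then obtain S x y where S: "S \<subseteq> G \<inter> ball c (1 / real (Suc n))" "connected S" "x \<in> S" "y \<in> S" "x \<noteq> y"
      using graph_ball_conn[OF gr cG'] by blast
    define C where "C = (\<lambda>y. k b0 (b,y)) ` S"
    have "C \<subseteq> {x\<in>M. p x = b}"
    proof
      fix z assume "z \<in> C"
      then obtain y' where y': "y' \<in> S" "z = k b0 (b,y')" unfolding C_def by blast
      have "k b0 (b,y') \<in> M" using bN y' S unfolding N_def by blast
      moreover have "p (k b0 (b,y')) = b" using kprops[OF b0B bU] y' S by blast
      ultimately show "z \<in> {x\<in>M. p x = b}" using y' by blast
    qed
    moreover have "connected C" unfolding C_def
    proof (rule connected_continuous_image[OF _ S(2)])
      show "continuous_on S (\<lambda>y. k b0 (b,y))"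
        by (rule continuous_on_compose2[OF kc[OF b0B]]) (use S bU in \<open>auto intro!: continuous_intros\<close>)
    qed
    ultimately obtain z where z: "C \<subseteq> {z}" using td unfolding totally_disconnected_def by blast
    have "k b0 (b,x) = k b0 (b,y)" using z S unfolding C_def by blast
    then have "h b0 (k b0 (b,x)) = h b0 (k b0 (b,y))" by simp
    moreover have "h b0 (k b0 (b,x)) = (b,x)" "h b0 (k b0 (b,y)) = (b,y)" using kprops[OF b0B bU] S by blast+
    ultimately have "(b,x) = (b,y)" by simp
    then show False using S by simp
  qed
  have bwd: "totally_disconnected {x\<in>M. p x = b}" if bB: "b \<in> B" and nF: "b \<notin> \<Union>F" for b
  proof (rule ccontr)
    assume "\<not> totally_disconnected {x\<in>M. p x = b}"
    then obtain C0 where C0: "C0 \<subseteq> {x\<in>M. p x = b}" "connected C0" "\<not> (\<exists>x. C0 \<subseteq> {x})"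
      unfolding totally_disconnected_def by blast
    have "C0 \<noteq> {}" using C0(3) by blast
    then obtain a1 where a1: "a1 \<in> C0" by blast
    have "\<not> C0 \<subseteq> {a1}" using C0(3) by blast
    then obtain a2 where a2: "a2 \<in> C0" "a2 \<noteq> a1" by blast
    have a12: "a1 \<in> C0" "a2 \<in> C0" "a1 \<noteq> a2" using a1 a2 by auto
    obtain b0 where b0: "b0 \<in> D" "b \<in> U b0" using Dcov bB by blast
    have b0B: "b0 \<in> B" using b0 D by auto
    have Mc: "compact M" by (rule closedin_compact[OF cE assms(3)])
    have "closed {x\<in>E. p x = b}"
      by (rule closedin_closed_trans[OF continuous_closedin_preimage_constant[OF pc] compact_imp_closed[OF cE]])
    moreover have "{x\<in>M. p x = b} = M \<inter> {x\<in>E. p x = b}" using assms(2) by blast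
    ultimately have Mbcl: "closed {x\<in>M. p x = b}" using compact_imp_closed[OF Mc] by (simp add: closed_Int)
    define C where "C = closure C0"
    have CM: "C \<subseteq> {x\<in>M. p x = b}" unfolding C_def by (rule closure_minimal[OF C0(1) Mbcl])
    have "compact (M \<inter> C)" unfolding C_def by (rule compact_Int_closed[OF Mc closed_closure])
    moreover have "M \<inter> C = C" using CM by blast
    ultimately have cC: "compact C" by simp
    have connC: "connected C" unfolding C_def by (rule connected_imp_connected_closure[OF C0(2)])
    have CUb: "C \<subseteq> {x\<in>E. p x \<in> U b0}" using CM assms(2) b0 by blast
    define K where "K = (\<lambda>x. snd (h b0 x)) ` C"
    have contK: "continuous_on C (\<lambda>x. snd (h b0 x))"
      by (intro continuous_on_snd continuous_on_subset[OF hc[OF b0B] CUb])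
    have cK: "compact K" unfolding K_def by (rule compact_continuous_image[OF contK cC])
    have connK: "connected K" unfolding K_def by (rule connected_continuous_image[OF contK connC])
    have hC: "h b0 x = (b, snd (h b0 x))" if xC: "x \<in> C" for x
    proof -
      have "fst (h b0 x) = p x" using Uhk[OF b0B] CUb xC by blast
      then show ?thesis using CM xC by (metis (mono_tags, lifting) mem_Collect_eq prod.collapse subsetD)
    qed
    have KG: "K \<subseteq> G"
    proof
      fix z assume "z \<in> K"
      then obtain x where x: "x \<in> C" "z = snd (h b0 x)" unfolding K_def by blast
      have "h b0 x \<in> U b0 \<times> G" using him[OF b0B] CUb x by blast
      then show "z \<in> G" using x by auto
    qed
    have a12C: "a1 \<in> C" "a2 \<in> C" using a12 closure_subset unfolding C_def by blast+
    have "snd (h b0 a1) \<noteq> snd (h b0 a2)"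
    proof
      assume "snd (h b0 a1) = snd (h b0 a2)"
      then have "h b0 a1 = h b0 a2" using hC a12C by metis
      then have "k b0 (h b0 a1) = k b0 (h b0 a2)" by simp
      then show False using khx[OF b0B] a12C CUb a12(3) by (metis subsetD)
    qed
    moreover have "snd (h b0 a1) \<in> K" "snd (h b0 a2) \<in> K" unfolding K_def using a12C by blast+
    ultimately obtain W where W: "openin (top_of_set G) W" "W \<noteq> {}" "W \<subseteq> K"
      using graph_closed_conn_interior[OF gr cK KG connK] by blast
    obtain y where yW: "y \<in> W" using W by blast
    obtain Ob where Ob: "open Ob" "W = G \<inter> Ob" using W(1) unfolding openin_open by blast
    have yOb: "y \<in> Ob" and yG: "y \<in> G" using yW Ob by blast+
    obtain e where e: "e > 0" "ball y e \<subseteq> Ob"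
      using open_contains_ball_eq[OF Ob(1), THEN iffD1, OF yOb] by blast
    have e2: "e/2 > 0" using e by simp
    obtain n where n: "inverse (real (Suc n)) < e/2"
      using reals_Archimedean[OF e2] by (elim exE)
    have rn: "1 / real (Suc n) < e/2" using n by (metis inverse_eq_divide)
    obtain c where c: "c \<in> Q n" "y \<in> ball c (1 / real (Suc n))" using Q[of n] \<open>y \<in> G\<close> by blast
    have GK: "G \<inter> ball c (1 / real (Suc n)) \<subseteq> K"
    proof
      fix z assume z: "z \<in> G \<inter> ball c (1 / real (Suc n))"
      have "dist y z \<le> dist y c + dist c z" by (rule dist_triangle)
      also have "\<dots> < e" using z c rn by (simp add: dist_commute)
      finally have "z \<in> ball y e" by simp
      then have "z \<in> W" using e Ob z by blast
      then show "z \<in> K" using W by blast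
    qed
    have "b \<in> N b0 c n" unfolding N_def
    proof (intro CollectI conjI ballI)
      show "b \<in> U b0" by (rule b0(2))
      fix z assume "z \<in> G \<inter> ball c (1 / real (Suc n))"
      then have "z \<in> K" using GK by blast
      then obtain x where x: "x \<in> C" "z = snd (h b0 x)" unfolding K_def by blast
      have "k b0 (b,z) = k b0 (h b0 x)" using hC[OF x(1)] x by simp
      also have "\<dots> = x" using khx[OF b0B] x CUb by blast
      finally show "k b0 (b,z) \<in> M" using x CM by blast
    qed
    moreover have "N b0 c n \<in> F" unfolding F_def using b0 c by force
    ultimately show False using nF by blast
  qed
  have eq: "{b\<in>B. totally_disconnected {x\<in>M. p x = b}} = B - \<Union>F"
    using fwd bwd by blast
  show ?thesis unfolding residual_in_def using cntF ndF eq by blast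
qed


end
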